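(* Let $\Sigma$ be an $(m,n)$-multirate system with operators $A_t,B_t,C_t,D_t$, let $\mathcal A:=\mathcal T_{m\overline n}(A)$, $\mathcal B:=\mathcal T_{m\overline n}(B)$, $\mathcal C:=\mathcal T_{m\overline n}(C)$, $\mathcal D:=\mathcal T_{m\overline n}(D)$, let $0\neq z\in\rho_{m\overline n}(\mathcal A)$, let the input $u$ be a $U$-valued $(n,z^{\overline m})$-EMP and put $\mathbf u:=\mathcal F_{n,z^{\overline m}}u$. \begin{enumerate} \item There is a unique initial state $x_0\in X$ such that the signals $u^\circ$, $x$, $y^\circ$ of the central system of $\Sigma$ with $x(0)=x_0$ are $(m\overline n,z)$-EMPs, and the output $y$ is an $(m,z^{\overline n})$-EMP. \item For this $x_0$, with $\mathbf u^\circ:=\mathcal F_{m\overline n,z}u^\circ$, $\mathbf x:=\mathcal F_{m\overline n,z}x$, $\mathbf y^\circ:=\mathcal F_{m\overline n,z}y^\circ$ and $\mathbf y:=\mathcal F_{m,z^{\overline n}}y$, one has \[ \mathcal N_{m\overline n}\mathbf x=z\mathcal A\mathbf x+z\mathcal B\mathbf u^\circ,\quad \mathbf y^\circ=\mathcal C\mathbf x+\mathcal D\mathbf u^\circ,\quad \mathbf u^\circ=\Pi_{n,1,\overline m}\mathbf u/\overline m,\quad \mathbf y=\Pi_{m,1,\overline n}^*\mathbf y^\circ. \tag{$\ast$} \] Conversely, if $\mathbf u\in U^n$, $\mathbf u^\circ\in U^{m\overline n}$, $\mathbf x\in X^{m\overline n}$, $\mathbf y^\circ\in Y^{m\overline n}$,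 $\mathbf y\in Y^m$ satisfy $(\ast)$, then the corresponding time-domain sequences $u=\mathcal F_{n,z^{\overline m}}^{-1}\mathbf u$, $u^\circ=\mathcal F^{-1}_{m\overline n,z}\mathbf u^\circ$, $x=\mathcal F^{-1}_{m\overline n,z}\mathbf x$, $y^\circ=\mathcal F^{-1}_{m\overline n,z}\mathbf y^\circ$, $y=\mathcal F^{-1}_{m,z^{\overline n}}\mathbf y$ satisfy the equations of $\Sigma$, and $x(0)$ equals the sum of the entries of $\mathbf x$. \item For $z\in\rho_{m\overline n}(\mathcal A)$, $\mathbf u$ uniquely determines $\mathbf u^\circ,\mathbf x,\mathbf y^\circ,\mathbf y$ in $(\ast)$; in particular the map $\mathbf u\mapsto\mathbf y$ equals \[ \mathcal G(z):=\Pi_{m,1,\overline n}^*\big(z\mathcal C(\mathcal N_{m\overline n}-z\mathcal A)^{-1}\mathcal B+\mathcal D\big)\Pi_{n,1,\overline m}/\overline m . \] \end{enumerate}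
   Context: $j$ is the imaginary unit; $U,X,Y$ are separable complex Hilbert spaces. Upsampler: $(\uparrow_q v)_t=v_{t/q}$ if $t/q\in\mathbb Z$, else $0$; downsampler: $(\downarrow_q v)_t=v_{qt}$. Multirate system: for $m,n\in\mathbb Z^+$ let $c=\gcd(m,n)$, $\overline m=m/c$, $\overline n=n/c$. An $(m,n)$-multirate system $\Sigma$ consists of $m\overline n$-periodic sequences of bounded operators $A_t:X\to X$, $B_t:U\to X$, $C_t:X\to Y$, $D_t:U\to Y$ and the equations $x_{t+1}=A_tx_t+B_tu^\circ_t$, $y^\circ_t=C_tx_t+D_tu^\circ_t$, $u^\circ=\uparrow_{\overline m}u$, $y=\downarrow_{\overline n}y^\circ$ (input $u$, state $x$, output $y$); the part with input $u^\circ$ and output $y^\circ$ is the central system. EMPs: a $V$-valued $(T,z)$-EMP ($z\ne0$) is $v_t=z^{-t}\sum_{k=0}^{T-1}\widehat v_ke^{2\pi jtk/T}$, $t\in\mathbb Z$; $\mathcal F_{T,z}v:=(\widehat v_k)_{k=0}^{T-1}$ with $\widehat v_k=\frac1T\sum_{t=0}^{T-1}v_tz^te^{-2\pi jtk/T}$. An EMP is identified with its restriction to any set containing $T$ consecutive integers (e.g. $\mathbb N_0$ or $\{0,\dots,T-1\}$), and $\mathcal F_{T,z}^{-1}$ returns the restriction to $\{0,\dots,T-1\}$. $\Pi_{T,w,q}:V^T\to V^{qT}$, $(\Pi_{T,w,q}v)_{t+kT}=w^{kT}v_t$ ($0\le t<T$, $0\le k<q$), and $\Pi^*_{T,w,q}:V^{qT}\to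 V^T$, $(\Pi^*_{T,w,q}v)_t=\sum_{k=0}^{q-1}\overline w^{kT}v_{t+kT}$. For a $T$-periodic operator sequence $A_t$: $\widehat A_k=\frac1T\sum_{t=0}^{T-1}A_te^{-2\pi jtk/T}$ and the Toeplitz transform $\mathcal T_T(A)$ is the $T\times T$ block operator matrix with entry $\widehat A_{(r-\ell)\bmod T}$ in row $r$, column $\ell$. $\mathcal N_T:=\mathrm{diag}(e^{2\pi jk/T}I)_{k=0}^{T-1}$ (identity of the relevant space). $\rho_T(\mathcal A):=\{z\in\mathbb C:\mathcal N_T-z\mathcal A\text{ has a bounded inverse}\}$. *)

theory Defs
  imports "HOL-Analysis.Analysis"
begin

class complex_vector = real_vector +
  fixes scaleC :: "complex \<Rightarrow> 'a \<Rightarrow> 'a" (infixr "*\<^sub>C" 75)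
  assumes scaleC_add_right: "scaleC a (x + y) = scaleC a x + scaleC a y"
    and scaleC_add_left: "scaleC (a + b) x = scaleC a x + scaleC b x"
    and scaleC_scaleC: "scaleC a (scaleC b x) = scaleC (a * b) x"
    and scaleC_one: "scaleC 1 x = x"
    and scaleR_scaleC: "scaleR r x = scaleC (complex_of_real r) x"

class complex_normed_vector = complex_vector + real_normed_vector +
  assumes norm_scaleC: "norm (scaleC a x) = cmod a * norm x"

class complex_inner = complex_normed_vector +
  fixes cinner :: "'a \<Rightarrow> 'a \<Rightarrow> complex"
  assumes cinner_commute: "cinner x y = cnj (cinner y x)"
    and cinner_add_left: "cinner (x + y) z = cinner x z + cinner y z"
    and cinner_scaleC_left: "cinner (scaleC r x) y = cnj r * cinner x y"
    and cinner_nonneg: "Im (cinner x x) = 0 \<and> 0 \<le> Re (cinner x x)"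
    and cinner_eq_zero_iff: "cinner x x = 0 \<longleftrightarrow> x = 0"
    and norm_eq_sqrt_cinner: "norm x = sqrt (Re (cinner x x))"

text \<open>A separable complex Hilbert space: complete complex inner product space whose
  (metric) topology is second countable (equivalently separable).\<close>
class sep_chilbert = complex_inner + complete_space + second_countable_topology

definition bounded_clinear :: "('a::complex_normed_vector \<Rightarrow> 'b::complex_normed_vector) \<Rightarrow> bool" where
  "bounded_clinear f \<longleftrightarrow> bounded_linear f \<and> (\<forall>c x. f (c *\<^sub>C x) = c *\<^sub>C f x)"

definition mbar :: "nat \<Rightarrow> nat \<Rightarrow> nat" where "mbar m n = m div gcd m n"
definition nbar :: "nat \<Rightarrow> nat \<Rightarrow> nat" where "nbar m n = n div gcd m n"

definition upsample :: "nat \<Rightarrow> (nat \<Rightarrow> 'v::zero) \<Rightarrow> nat \<Rightarrow> 'v" where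
  "upsample q v t = (if q dvd t then v (t div q) else 0)"

definition downsample :: "nat \<Rightarrow> (nat \<Rightarrow> 'v) \<Rightarrow> nat \<Rightarrow> 'v" where
  "downsample q v t = v (q * t)"

primrec central_state :: "(nat \<Rightarrow> 'x \<Rightarrow> 'x::plus) \<Rightarrow> (nat \<Rightarrow> 'u \<Rightarrow> 'x) \<Rightarrow> (nat \<Rightarrow> 'u) \<Rightarrow> 'x \<Rightarrow> nat \<Rightarrow> 'x" where
  "central_state A B uo x0 0 = x0"
| "central_state A B uo x0 (Suc t) = A t (central_state A B uo x0 t) + B t (uo t)"

definition central_output :: "(nat \<Rightarrow> 'x \<Rightarrow> 'y::plus) \<Rightarrow> (nat \<Rightarrow> 'u \<Rightarrow> 'y) \<Rightarrow> (nat \<Rightarrow> 'x) \<Rightarrow> (nat \<Rightarrow> 'u) \<Rightarrow> nat \<Rightarrow> 'y" where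
  "central_output C D x uo t = C t (x t) + D t (uo t)"

definition multirate_eqs ::
  "nat \<Rightarrow> nat \<Rightarrow> (nat \<Rightarrow> 'x \<Rightarrow> 'x::plus) \<Rightarrow> (nat \<Rightarrow> 'u::zero \<Rightarrow> 'x) \<Rightarrow> (nat \<Rightarrow> 'x \<Rightarrow> 'y::plus) \<Rightarrow> (nat \<Rightarrow> 'u \<Rightarrow> 'y)
   \<Rightarrow> (nat \<Rightarrow> 'u) \<Rightarrow> (nat \<Rightarrow> 'u) \<Rightarrow> (nat \<Rightarrow> 'x) \<Rightarrow> (nat \<Rightarrow> 'y) \<Rightarrow> (nat \<Rightarrow> 'y) \<Rightarrow> bool" where
  "multirate_eqs m n A B C D u uo x yo y \<longleftrightarrow>
     (\<forall>t. x (Suc t) = A t (x t) + B t (uo t)) \<and>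
     (\<forall>t. yo t = C t (x t) + D t (uo t)) \<and>
     uo = upsample (mbar m n) u \<and> y = downsample (nbar m n) yo"

definition emp_seq :: "nat \<Rightarrow> complex \<Rightarrow> (nat \<Rightarrow> 'v::complex_vector) \<Rightarrow> nat \<Rightarrow> 'v" where
  "emp_seq T z vh t = inverse (z ^ t) *\<^sub>C
     (\<Sum>k<T. exp (2 * of_real pi * \<i> * of_nat t * of_nat k / of_nat T) *\<^sub>C vh k)"

definition is_EMP :: "nat \<Rightarrow> complex \<Rightarrow> (nat \<Rightarrow> 'v::complex_vector) \<Rightarrow> bool" where
  "is_EMP T z v \<longleftrightarrow> (\<exists>vh. v = emp_seq T z vh)"

text \<open>Vectors in V^T are functions nat => V vanishing from index T on.\<close>
definition vecs :: "nat \<Rightarrow> (nat \<Rightarrow> 'v::zero) set" where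
  "vecs T = {v. \<forall>k\<ge>T. v k = 0}"

definition F_trans :: "nat \<Rightarrow> complex \<Rightarrow> (nat \<Rightarrow> 'v::complex_vector) \<Rightarrow> nat \<Rightarrow> 'v" where
  "F_trans T z v k = (if k < T then inverse (of_nat T) *\<^sub>C
     (\<Sum>t<T. (z ^ t * exp (- (2 * of_real pi * \<i> * of_nat t * of_nat k / of_nat T))) *\<^sub>C v t) else 0)"

definition Pi_op :: "nat \<Rightarrow> complex \<Rightarrow> nat \<Rightarrow> (nat \<Rightarrow> 'v::complex_vector) \<Rightarrow> nat \<Rightarrow> 'v" where
  "Pi_op T w q v i = (if i < q * T then (w ^ ((i div T) * T)) *\<^sub>C v (i mod T) else 0)"

definition Pi_adj :: "nat \<Rightarrow> complex \<Rightarrow> nat \<Rightarrow> (nat \<Rightarrow> 'v::complex_vector) \<Rightarrow> nat \<Rightarrow> 'v" where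
  "Pi_adj T w q v t = (if t < T then (\<Sum>k<q. (cnj w ^ (k * T)) *\<^sub>C v (t + k * T)) else 0)"

definition hat_op :: "nat \<Rightarrow> (nat \<Rightarrow> 'a \<Rightarrow> 'b::complex_vector) \<Rightarrow> nat \<Rightarrow> 'a \<Rightarrow> 'b" where
  "hat_op T A k x = inverse (of_nat T) *\<^sub>C
     (\<Sum>t<T. exp (- (2 * of_real pi * \<i> * of_nat t * of_nat k / of_nat T)) *\<^sub>C A t x)"

text \<open>Toeplitz transform: block matrix with entry hat A_{(r-l) mod T} at (r,l).\<close>
definition toeplitz :: "nat \<Rightarrow> (nat \<Rightarrow> 'a \<Rightarrow> 'b::complex_vector) \<Rightarrow> (nat \<Rightarrow> 'a) \<Rightarrow> nat \<Rightarrow> 'b" where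
  "toeplitz T A v r = (if r < T then (\<Sum>l<T. hat_op T A (nat ((int r - int l) mod int T)) (v l)) else 0)"

definition N_op :: "nat \<Rightarrow> (nat \<Rightarrow> 'v::complex_vector) \<Rightarrow> nat \<Rightarrow> 'v" where
  "N_op T v k = (if k < T then exp (2 * of_real pi * \<i> * of_nat k / of_nat T) *\<^sub>C v k else 0)"

definition has_bounded_inverse :: "nat \<Rightarrow> ((nat \<Rightarrow> 'v::complex_normed_vector) \<Rightarrow> nat \<Rightarrow> 'v) \<Rightarrow> bool" where
  "has_bounded_inverse T L \<longleftrightarrow> (\<exists>G.
     (\<forall>v\<in>vecs T. G v \<in> vecs T \<and> G (L v) = v \<and> L (G v) = v) \<and>
     (\<forall>a b v w. v \<in> vecs T \<longrightarrow> w \<in> vecs T \<longrightarrow>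
        G (\<lambda>k. a *\<^sub>C v k + b *\<^sub>C w k) = (\<lambda>k. a *\<^sub>C G v k + b *\<^sub>C G w k)) \<and>
     (\<exists>K. \<forall>v\<in>vecs T. (\<Sum>k<T. norm (G v k)) \<le> K * (\<Sum>k<T. norm (v k))))"

definition rho :: "nat \<Rightarrow> ((nat \<Rightarrow> 'v::complex_normed_vector) \<Rightarrow> nat \<Rightarrow> 'v) \<Rightarrow> complex set" where
  "rho T AA = {z. has_bounded_inverse T (\<lambda>v k. N_op T v k - z *\<^sub>C AA v k)}"

definition vec_inv :: "nat \<Rightarrow> ((nat \<Rightarrow> 'v::zero) \<Rightarrow> nat \<Rightarrow> 'v) \<Rightarrow> (nat \<Rightarrow> 'v) \<Rightarrow> nat \<Rightarrow> 'v" where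
  "vec_inv T L v = (SOME w. w \<in> vecs T \<and> L w = v)"

definition star_eqs ::
  "nat \<Rightarrow> nat \<Rightarrow> (nat \<Rightarrow> 'x \<Rightarrow> 'x::complex_vector) \<Rightarrow> (nat \<Rightarrow> 'u::complex_vector \<Rightarrow> 'x)
   \<Rightarrow> (nat \<Rightarrow> 'x \<Rightarrow> 'y::complex_vector) \<Rightarrow> (nat \<Rightarrow> 'u \<Rightarrow> 'y) \<Rightarrow> complex
   \<Rightarrow> (nat \<Rightarrow> 'u) \<Rightarrow> (nat \<Rightarrow> 'u) \<Rightarrow> (nat \<Rightarrow> 'x) \<Rightarrow> (nat \<Rightarrow> 'y) \<Rightarrow> (nat \<Rightarrow> 'y) \<Rightarrow> bool" where
  "star_eqs m n A B C D z u uo x yo y \<longleftrightarrow>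
     (let P = m * nbar m n in
       N_op P x = (\<lambda>k. z *\<^sub>C toeplitz P A x k + z *\<^sub>C toeplitz P B uo k) \<and>
       yo = (\<lambda>k. toeplitz P C x k + toeplitz P D uo k) \<and>
       uo = (\<lambda>k. inverse (of_nat (mbar m n)) *\<^sub>C Pi_op n 1 (mbar m n) u k) \<and>
       y = Pi_adj m 1 (nbar m n) yo)"

definition transfer ::
  "nat \<Rightarrow> nat \<Rightarrow> (nat \<Rightarrow> 'x \<Rightarrow> 'x::complex_vector) \<Rightarrow> (nat \<Rightarrow> 'u::complex_vector \<Rightarrow> 'x)
   \<Rightarrow> (nat \<Rightarrow> 'x \<Rightarrow> 'y::complex_vector) \<Rightarrow> (nat \<Rightarrow> 'u \<Rightarrow> 'y) \<Rightarrow> complex \<Rightarrow> (nat \<Rightarrow> 'u) \<Rightarrow> nat \<Rightarrow> 'y" where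
  "transfer m n A B C D z u =
     (let P = m * nbar m n;
          Pu = (\<lambda>k. inverse (of_nat (mbar m n)) *\<^sub>C Pi_op n 1 (mbar m n) u k);
          R = vec_inv P (\<lambda>v k. N_op P v k - z *\<^sub>C toeplitz P A v k)
      in Pi_adj m 1 (nbar m n)
           (\<lambda>k. z *\<^sub>C toeplitz P C (R (toeplitz P B Pu)) k + toeplitz P D Pu k))"

end

theory Submission
  imports Defs
begin


interpretation cv: module "scaleC :: complex \<Rightarrow> 'a::complex_vector \<Rightarrow> 'a"
  by standard (simp_all add: scaleC_add_right scaleC_add_left scaleC_scaleC scaleC_one)

lemma "(a::complex) *\<^sub>C (\<Sum>i\<in>S. f i) = (\<Sum>i\<in>S. a *\<^sub>C (f i::'b::complex_vector))"
  by (rule cv.scale_sum_right)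

definition rt :: "nat \<Rightarrow> complex" where "rt T = exp (2 * of_real pi * \<i> / of_nat T)"

lemma rt_pow: "rt T ^ j = exp (2 * of_real pi * \<i> * of_nat j / of_nat T)"
proof -
  have "rt T ^ j = exp (of_nat j * (2 * of_real pi * \<i> / of_nat T))"
    unfolding rt_def by (simp only: exp_of_nat_mult)
  also have "\<dots> = exp (2 * of_real pi * \<i> * of_nat j / of_nat T)"
    by (rule arg_cong[where f=exp]) simp
  finally show ?thesis .
qed

lemma exp1: "exp (2 * of_real pi * \<i> * of_nat t * of_nat k / of_nat T) = rt T ^ (t*k)"
  by (simp add: rt_pow mult.assoc)

lemma exp2: "exp (- (2 * of_real pi * \<i> * of_nat t * of_nat k / of_nat T)) = inverse (rt T ^ (t*k))"
  by (simp add: exp1 exp_minus)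

lemma exp3: "exp (2 * of_real pi * \<i> * of_nat k / of_nat T) = rt T ^ k"
  by (simp add: rt_pow)

lemma rt_nz: "rt T \<noteq> 0" by (simp add: rt_def)

lemma rt_eq1: "0 < T \<Longrightarrow> rt T ^ a = 1 \<longleftrightarrow> T dvd a"
  by (simp add: rt_pow complex_root_unity_eq_1)

lemma rt_T: "0 < T \<Longrightarrow> rt T ^ T = 1" by (simp add: rt_eq1)

lemma rt_mod: "0 < T \<Longrightarrow> rt T ^ a = rt T ^ (a mod T)"
proof -
  assume T: "0 < T"
  have "rt T ^ a = rt T ^ (T * (a div T) + a mod T)" by simp
  also have "\<dots> = (rt T ^ T) ^ (a div T) * rt T ^ (a mod T)" by (simp only: power_add power_mult)
  finally show ?thesis using rt_T[OF T] by simp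
qed

lemma rt_mult: "0 < a \<Longrightarrow> rt (a * b) ^ a = rt b"
proof -
  assume a: "0 < a"
  have "rt (a * b) ^ a = exp (2 * of_real pi * \<i> * of_nat a / of_nat (a * b))" by (rule rt_pow)
  also have "\<dots> = rt b" unfolding rt_def by (rule arg_cong[where f=exp]) (use a in simp)
  finally show ?thesis .
qed

lemma rt_inv: "0 < T \<Longrightarrow> inverse (rt T ^ a) = rt T ^ (a * (T - 1))"
proof -
  assume T: "0 < T"
  have e: "a + a * (T - 1) = T * a" using T by (cases T) (simp_all add: algebra_simps)
  have "rt T ^ a * rt T ^ (a * (T - 1)) = rt T ^ (T * a)"
    by (simp only: power_add[symmetric] e)
  also have "\<dots> = 1" using rt_T[OF T] by (simp only: power_mult power_one)
  finally have "rt T ^ a * rt T ^ (a * (T - 1)) = 1" .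
  then show ?thesis by (metis inverse_unique)
qed

lemma orth: "0 < T \<Longrightarrow> (\<Sum>t<T. (rt T ^ a) ^ t) = (if T dvd a then of_nat T else 0)"
proof -
  assume T: "0 < T"
  show ?thesis
  proof (cases "T dvd a")
    case True
    have "rt T ^ a = 1" using True rt_eq1[OF T] by simp
    then show ?thesis using True by simp
  next
    case False
    have q: "(rt T ^ a) ^ T = 1" using rt_T[OF T] by (metis mult.commute power_mult power_one)
    show ?thesis using False rt_eq1[OF T, of a] by (simp add: sum_gp_strict q)
  qed
qed

lemma dvd_aux: "k < T \<Longrightarrow> l < T \<Longrightarrow> T dvd (l + k * (T - 1)) \<longleftrightarrow> l = (k::nat)"
proof (cases k)
  case 0
  then show "k < T \<Longrightarrow> l < T \<Longrightarrow> ?thesis" by auto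
next
  case (Suc j)
  assume "k < T" "l < T"
  have e: "l + k * (T - 1) = (l + T - k) + j * T" using Suc \<open>k < T\<close>
    by (simp add: algebra_simps diff_mult_distrib2)
  have "T dvd (l + T - k) \<longleftrightarrow> l = k"
  proof
    assume "T dvd (l + T - k)"
    moreover have "0 < l + T - k" "l + T - k < 2 * T" using \<open>k<T\<close> \<open>l<T\<close> by auto
    ultimately obtain q where q: "l + T - k = T * q" "0 < T * q" "T * q < 2 * T"
      by (metis dvdE)
    have "0 < q" using q(2) by simp
    moreover have "q < 2" using q(3) by (metis mult.commute mult_less_cancel1)
    ultimately have "q = 1" by simp
    then have "l + T - k = T" using q by simp
    then show "l = k" using \<open>k<T\<close> by simp
  qed simp
  then show ?thesis unfolding e by (simp only: dvd_add_times_triv_right_iff)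
qed

lemma orth2: "0 < T \<Longrightarrow> k < T \<Longrightarrow> l < T \<Longrightarrow>
  (\<Sum>t<T. rt T ^ (t*l) * inverse (rt T ^ (t*k))) = (if l = k then of_nat T else 0)"
proof -
  assume T: "0 < T" and kl: "k < T" "l < T"
  have "rt T ^ (t*l) * inverse (rt T ^ (t*k)) = (rt T ^ (l + k * (T - 1))) ^ t" for t
  proof -
    have "rt T ^ (t*l) * inverse (rt T ^ (t*k)) = rt T ^ (t*l) * rt T ^ (t*k*(T-1))"
      using T by (simp only: rt_inv)
    also have "\<dots> = rt T ^ (t*l + t*k*(T-1))" by (simp only: power_add)
    also have "\<dots> = rt T ^ ((l + k * (T - 1)) * t)"
      by (rule arg_cong[where f="\<lambda>e. rt T ^ e"]) (simp add: algebra_simps)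
    also have "\<dots> = (rt T ^ (l + k * (T - 1))) ^ t" by (simp only: power_mult)
    finally show ?thesis .
  qed
  then show ?thesis using orth[OF T, of "l + k * (T - 1)"] dvd_aux[OF kl] by simp
qed



lemma emp_pow: "emp_seq T z vh t = inverse (z^t) *\<^sub>C (\<Sum>k<T. rt T ^ (t*k) *\<^sub>C vh k)"
  unfolding emp_seq_def exp1 ..

lemma F_pow: "F_trans T z v k = (if k < T then inverse (of_nat T) *\<^sub>C
     (\<Sum>t<T. (z ^ t * inverse (rt T ^ (t*k))) *\<^sub>C v t) else 0)"
  unfolding F_trans_def exp2 ..

lemma hat_pow: "hat_op T A k x = inverse (of_nat T) *\<^sub>C
     (\<Sum>t<T. inverse (rt T ^ (t*k)) *\<^sub>C A t x)"
  unfolding hat_op_def exp2 ..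

lemma N_pow: "N_op T v k = (if k < T then rt T ^ k *\<^sub>C v k else 0)"
  unfolding N_op_def exp3 ..

lemma F_emp:
  fixes vh :: "nat \<Rightarrow> 'v::complex_vector"
  assumes T: "0 < T" and z: "z \<noteq> 0" and k: "k < T"
  shows "F_trans T z (emp_seq T z vh) k = vh k"
proof -
  have "F_trans T z (emp_seq T z vh) k = inverse (of_nat T) *\<^sub>C
     (\<Sum>t<T. (z ^ t * inverse (rt T ^ (t*k))) *\<^sub>C (inverse (z^t) *\<^sub>C (\<Sum>l<T. rt T ^ (t*l) *\<^sub>C vh l)))"
    using k by (simp add: F_pow emp_pow)
  also have "\<dots> = inverse (of_nat T) *\<^sub>C
     (\<Sum>t<T. \<Sum>l<T. (rt T ^ (t*l) * inverse (rt T ^ (t*k))) *\<^sub>C vh l)"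
  proof -
    have "(z ^ t * inverse (rt T ^ (t*k))) *\<^sub>C (inverse (z^t) *\<^sub>C (\<Sum>l<T. rt T ^ (t*l) *\<^sub>C vh l))
       = (\<Sum>l<T. (rt T ^ (t*l) * inverse (rt T ^ (t*k))) *\<^sub>C vh l)" for t
    proof -
      have "(z ^ t * inverse (rt T ^ (t*k))) *\<^sub>C (inverse (z^t) *\<^sub>C (\<Sum>l<T. rt T ^ (t*l) *\<^sub>C vh l))
         = inverse (rt T ^ (t*k)) *\<^sub>C (\<Sum>l<T. rt T ^ (t*l) *\<^sub>C vh l)"
      proof -
        have "z ^ t * inverse (rt T ^ (t*k)) * inverse (z^t) = inverse (rt T ^ (t*k))"
          using z by (simp add: field_simps)
        then show ?thesis by (metis scaleC_scaleC)
      qed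
      also have "\<dots> = (\<Sum>l<T. (rt T ^ (t*l) * inverse (rt T ^ (t*k))) *\<^sub>C vh l)"
        by (simp add: cv.scale_sum_right scaleC_scaleC mult.commute)
      finally show ?thesis .
    qed
    then show ?thesis by simp
  qed
  also have "\<dots> = inverse (of_nat T) *\<^sub>C
     (\<Sum>l<T. (\<Sum>t<T. rt T ^ (t*l) * inverse (rt T ^ (t*k))) *\<^sub>C vh l)"
    by (subst sum.swap) (simp add: cv.scale_sum_left)
  also have "\<dots> = inverse (of_nat T) *\<^sub>C (\<Sum>l<T. (if l = k then of_nat T else 0) *\<^sub>C vh l)"
    using T k by (simp add: orth2)
  also have "\<dots> = inverse (of_nat T) *\<^sub>C (of_nat T *\<^sub>C vh k)"
  proof -
    have "\<And>l. (if l = k then of_nat T else 0) *\<^sub>C vh l = (if l = k then of_nat T *\<^sub>C vh k else 0)"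
      by simp
    then show ?thesis using k by (simp only: sum.delta) simp
  qed
  also have "\<dots> = vh k" using T by (simp add: scaleC_scaleC)
  finally show ?thesis .
qed



definition clin :: "('a::complex_vector \<Rightarrow> 'b::complex_vector) \<Rightarrow> bool" where
  "clin f \<longleftrightarrow> (\<forall>x y. f (x + y) = f x + f y) \<and> (\<forall>c x. f (c *\<^sub>C x) = c *\<^sub>C f x)"

lemma bcl_clin: "bounded_clinear f \<Longrightarrow> clin f"
  unfolding bounded_clinear_def clin_def by (auto dest: bounded_linear.linear simp: linear_add)

lemma clin_add: "clin f \<Longrightarrow> f (x + y) = f x + f y" by (simp add: clin_def)
lemma clin_scale: "clin f \<Longrightarrow> f (c *\<^sub>C x) = c *\<^sub>C f x" by (simp add: clin_def)
lemma clin_zero: "clin f \<Longrightarrow> f 0 = 0"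
  using clin_scale[of f 0 0] by simp
lemma clin_sum: "clin f \<Longrightarrow> f (\<Sum>i\<in>S. g i) = (\<Sum>i\<in>S. f (g i))"
proof (induction S rule: infinite_finite_induct)
  case (infinite A) then show ?case by (simp add: clin_zero)
next
  case empty then show ?case by (simp add: clin_zero)
next
  case (insert x F) then show ?case by (simp add: clin_add)
qed

lemma i1: "r < (P::nat) \<Longrightarrow> l < P \<Longrightarrow> (nat ((int r - int l) mod int P) + l) mod P = r"
  by (smt (verit, ccfv_SIG) diff_add_cancel int_eq_iff int_ops(5)
    mod_add_left_eq nat_0_le nat_int_comparison(2) of_nat_0_le_iff
    of_nat_mod pos_mod_sign zmod_trivial_iff)
lemma i2: "0 < (P::nat) \<Longrightarrow> nat ((int r - int l) mod int P) < P"
  by (metis nat_int pos_mod_bound zless_nat_conj)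
lemma i3: "k < (P::nat) \<Longrightarrow> nat ((int ((k + l) mod P) - int l) mod int P) = k"
  by (simp add: mod_diff_left_eq zmod_int)

lemma F_emp_all:
  fixes vh :: "nat \<Rightarrow> 'v::complex_vector"
  assumes T: "0 < T" and z: "z \<noteq> 0"
  shows "F_trans T z (emp_seq T z vh) = (\<lambda>k. if k < T then vh k else 0)"
proof
  fix k show "F_trans T z (emp_seq T z vh) k = (if k < T then vh k else 0)"
    by (cases "k < T") (simp add: F_emp[OF T z], simp add: F_pow)
qed

lemma emp_restrict: "emp_seq T z (\<lambda>k. if k < T then vh k else 0) = emp_seq T z vh"
  unfolding emp_pow by (intro ext arg_cong[where f="\<lambda>s. _ *\<^sub>C s"] sum.cong) auto

lemma F_vecs: "F_trans T z v \<in> vecs T"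
  by (simp add: vecs_def F_pow)

lemma EMP_F:
  fixes v :: "nat \<Rightarrow> 'v::complex_vector"
  assumes "is_EMP T z v" "0 < T" "z \<noteq> 0"
  shows "v = emp_seq T z (F_trans T z v)"
proof -
  obtain vh where v: "v = emp_seq T z vh" using assms(1) by (auto simp: is_EMP_def)
  show ?thesis unfolding v F_emp_all[OF assms(2,3)] emp_restrict ..
qed

lemma F_emp_vecs:
  fixes vh :: "nat \<Rightarrow> 'v::complex_vector"
  assumes "vh \<in> vecs T" "0 < T" "z \<noteq> 0"
  shows "F_trans T z (emp_seq T z vh) = vh"
  unfolding F_emp_all[OF assms(2,3)] using assms(1) by (auto simp: vecs_def)

lemma emp_inj:
  fixes a b :: "nat \<Rightarrow> 'v::complex_vector"
  assumes "a \<in> vecs T" "b \<in> vecs T" "0 < T" "z \<noteq> 0" "emp_seq T z a = emp_seq T z b"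
  shows "a = b"
  by (metis F_emp_vecs assms)

lemma emp_add: "emp_seq T z a t + emp_seq T z b t = emp_seq T z (\<lambda>k. a k + b k) t"
  unfolding emp_pow by (simp add: scaleC_add_right sum.distrib)

lemma emp_zero: "emp_seq T z vh 0 = (\<Sum>k<T. vh k)"
  unfolding emp_pow by simp

lemma emp_shift:
  fixes vh :: "nat \<Rightarrow> 'v::complex_vector"
  assumes z: "z \<noteq> 0"
  shows "emp_seq T z vh (Suc t) = emp_seq T z (\<lambda>k. inverse z *\<^sub>C N_op T vh k) t"
proof -
  have "emp_seq T z (\<lambda>k. inverse z *\<^sub>C N_op T vh k) t
      = inverse (z^t) *\<^sub>C (\<Sum>k<T. rt T ^ (t*k) *\<^sub>C (inverse z *\<^sub>C (rt T ^ k *\<^sub>C vh k)))"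
    unfolding emp_pow N_pow by simp
  also have "\<dots> = inverse (z^t) *\<^sub>C (\<Sum>k<T. inverse z *\<^sub>C (rt T ^ (Suc t * k) *\<^sub>C vh k))"
    by (simp add: scaleC_scaleC power_add mult.commute mult.left_commute)
  also have "\<dots> = inverse (z^t) *\<^sub>C inverse z *\<^sub>C (\<Sum>k<T. rt T ^ (Suc t * k) *\<^sub>C vh k)"
    by (simp add: cv.scale_sum_right)
  also have "\<dots> = emp_seq T z vh (Suc t)"
    unfolding emp_pow by (simp add: scaleC_scaleC mult.commute)
  finally show ?thesis ..
qed

lemma per_mod:
  fixes P t :: nat
  assumes per: "\<forall>t. A (t + P) = A t"
  shows "A (t mod P) = A t"
proof -
  have "A (s + q * P) = A s" for s and q :: nat
  proof (induction q)
    case 0 show ?case by simp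
  next
    case (Suc q)
    have "A (s + Suc q * P) = A ((s + q * P) + P)" by (simp add: algebra_simps)
    also have "\<dots> = A (s + q * P)" using per by simp
    also have "\<dots> = A s" by (rule Suc.IH)
    finally show ?case .
  qed
  then show ?thesis by (metis mod_div_decomp add.commute mult.commute)
qed



lemma op_expand:
  fixes A :: "nat \<Rightarrow> 'a \<Rightarrow> 'b::complex_vector"
  assumes P: "0 < P" and per: "\<forall>t. A (t + P) = A t"
  shows "A t x = (\<Sum>k<P. rt P ^ (t*k) *\<^sub>C hat_op P A k x)"
proof -
  have "(\<Sum>k<P. rt P ^ (t*k) *\<^sub>C hat_op P A k x)
     = (\<Sum>k<P. inverse (of_nat P) *\<^sub>C (\<Sum>s<P. (rt P ^ (k * (t mod P)) * inverse (rt P ^ (k * s))) *\<^sub>C A s x))"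
  proof (rule sum.cong[OF refl])
    fix k
    have "rt P ^ (t*k) = rt P ^ (k * (t mod P))"
      using P by (metis rt_mod mod_mult_right_eq mult.commute)
    then show "rt P ^ (t*k) *\<^sub>C hat_op P A k x
      = inverse (of_nat P) *\<^sub>C (\<Sum>s<P. (rt P ^ (k * (t mod P)) * inverse (rt P ^ (k * s))) *\<^sub>C A s x)"
      unfolding hat_pow by (simp add: cv.scale_sum_right scaleC_scaleC mult.commute mult.left_commute)
  qed
  also have "\<dots> = inverse (of_nat P) *\<^sub>C (\<Sum>s<P. (\<Sum>k<P. rt P ^ (k * (t mod P)) * inverse (rt P ^ (k * s))) *\<^sub>C A s x)"
    apply (simp only: cv.scale_sum_right[symmetric] cv.scale_sum_left)
    apply (subst sum.swap)
    apply (rule refl)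
    done
  also have "\<dots> = inverse (of_nat P) *\<^sub>C (\<Sum>s<P. (if t mod P = s then of_nat P else 0) *\<^sub>C A s x)"
    using P by (simp add: orth2)
  also have "\<dots> = inverse (of_nat P) *\<^sub>C (of_nat P *\<^sub>C A (t mod P) x)"
  proof -
    have "\<And>s. (if t mod P = s then of_nat P else 0) *\<^sub>C A s x = (if t mod P = s then of_nat P *\<^sub>C A (t mod P) x else 0)"
      by simp
    then show ?thesis using P by (simp only: sum.delta) simp
  qed
  also have "\<dots> = A t x" using P per_mod[OF per] by (simp add: scaleC_scaleC)
  finally show ?thesis ..
qed

lemma rt_cong: "0 < P \<Longrightarrow> a mod P = b mod P \<Longrightarrow> rt P ^ (t * a) = rt P ^ (t * b)"
  by (metis rt_mod mod_mult_right_eq)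

lemma toep_reindex:
  fixes A :: "nat \<Rightarrow> 'a \<Rightarrow> 'b::complex_vector"
  assumes P: "0 < P" and l: "l < P"
  shows "(\<Sum>r<P. rt P ^ (t*r) *\<^sub>C hat_op P A (nat ((int r - int l) mod int P)) x)
       = (\<Sum>k<P. rt P ^ (t*(k+l)) *\<^sub>C hat_op P A k x)"
proof (rule sum.reindex_bij_witness[where i="\<lambda>k. (k + l) mod P" and j="\<lambda>r. nat ((int r - int l) mod int P)"])
  fix a assume a: "a \<in> {..<P}"
  show "(nat ((int a - int l) mod int P) + l) mod P = a" using a l i1 by simp
  show "nat ((int a - int l) mod int P) \<in> {..<P}" using P i2 by simp
  have "rt P ^ (t * (nat ((int a - int l) mod int P) + l)) = rt P ^ (t * a)"
    using a l i1 P by (intro rt_cong) auto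
  then show "rt P ^ (t * (nat ((int a - int l) mod int P) + l)) *\<^sub>C hat_op P A (nat ((int a - int l) mod int P)) x
      = rt P ^ (t * a) *\<^sub>C hat_op P A (nat ((int a - int l) mod int P)) x" by simp
next
  fix b assume b: "b \<in> {..<P}"
  show "nat ((int ((b + l) mod P) - int l) mod int P) = b" using b i3 by simp
  show "(b + l) mod P \<in> {..<P}" using P by simp
qed

lemma op_emp:
  fixes A :: "nat \<Rightarrow> 'a::complex_vector \<Rightarrow> 'b::complex_vector"
  assumes P: "0 < P" and per: "\<forall>t. A (t + P) = A t" and lin: "\<forall>t. clin (A t)"
  shows "A t (emp_seq P z xv t) = emp_seq P z (toeplitz P A xv) t"
proof -
  have "A t (emp_seq P z xv t) = inverse (z^t) *\<^sub>C (\<Sum>l<P. rt P ^ (t*l) *\<^sub>C A t (xv l))"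
    unfolding emp_pow using lin by (simp add: clin_scale clin_sum)
  also have "\<dots> = inverse (z^t) *\<^sub>C (\<Sum>l<P. \<Sum>k<P. rt P ^ (t*(k+l)) *\<^sub>C hat_op P A k (xv l))"
  proof -
    have "rt P ^ (t*l) *\<^sub>C A t (xv l) = (\<Sum>k<P. rt P ^ (t*(k+l)) *\<^sub>C hat_op P A k (xv l))" for l
      apply (subst op_expand[OF P per, of t])
      apply (simp add: cv.scale_sum_right scaleC_scaleC power_add add_mult_distrib2 mult.commute)
      done
    then show ?thesis by simp
  qed
  also have "\<dots> = inverse (z^t) *\<^sub>C (\<Sum>l<P. \<Sum>r<P. rt P ^ (t*r) *\<^sub>C hat_op P A (nat ((int r - int l) mod int P)) (xv l))"
    apply (rule arg_cong[where f="\<lambda>s. inverse (z^t) *\<^sub>C s"])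
    apply (rule sum.cong[OF refl])
    apply (simp add: toep_reindex[OF P])
    done
  also have "\<dots> = inverse (z^t) *\<^sub>C (\<Sum>r<P. rt P ^ (t*r) *\<^sub>C (\<Sum>l<P. hat_op P A (nat ((int r - int l) mod int P)) (xv l)))"
    apply (simp only: cv.scale_sum_right)
    apply (subst sum.swap)
    apply (rule refl)
    done
  also have "\<dots> = emp_seq P z (toeplitz P A xv) t"
    unfolding emp_pow toeplitz_def by simp
  finally show ?thesis .
qed



lemma sum_split: fixes a b :: nat shows "(\<Sum>i<a*b. f i) = (\<Sum>j<a. \<Sum>k<b. f (j*b + k))"
proof -
  have "(\<Sum>i<a*b. f i) = (\<Sum>j<a. sum f {j*b..<j*b+b})"
    by (rule sum.nat_group[symmetric])
  also have "\<dots> = (\<Sum>j<a. \<Sum>k<b. f (j*b + k))"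
  proof (rule sum.cong[OF refl])
    fix j
    have "sum f {j*b..<j*b+b} = sum f {0+j*b..<b+j*b}" by (simp add: add.commute)
    also have "\<dots> = (\<Sum>k\<in>{0..<b}. f (k + j*b))" by (rule sum.shift_bounds_nat_ivl)
    also have "\<dots> = (\<Sum>k<b. f (j*b + k))" by (simp add: atLeast0LessThan add.commute)
    finally show "sum f {j*b..<j*b+b} = (\<Sum>k<b. f (j*b + k))" .
  qed
  finally show ?thesis .
qed

lemma up_emp:
  fixes uv :: "nat \<Rightarrow> 'v::complex_vector"
  assumes mb: "0 < mb" and n: "0 < n"
  shows "upsample mb (emp_seq n (z^mb) uv) t
       = emp_seq (mb*n) z (\<lambda>k. inverse (of_nat mb) *\<^sub>C Pi_op n 1 mb uv k) t"
proof -
  let ?P = "mb * n"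
  have "emp_seq ?P z (\<lambda>k. inverse (of_nat mb) *\<^sub>C Pi_op n 1 mb uv k) t
      = inverse (z^t) *\<^sub>C (\<Sum>i<mb*n. (rt ?P ^ (t*i) * inverse (of_nat mb)) *\<^sub>C uv (i mod n))"
    unfolding emp_pow Pi_op_def
    by (intro arg_cong[where f="\<lambda>s. inverse (z^t) *\<^sub>C s"] sum.cong refl) (simp add: scaleC_scaleC)
  also have "\<dots> = inverse (z^t) *\<^sub>C (\<Sum>j<mb. \<Sum>k<n. (rt ?P ^ (t*(j*n+k)) * inverse (of_nat mb)) *\<^sub>C uv ((j*n+k) mod n))"
    by (simp only: sum_split)
  also have "\<dots> = inverse (z^t) *\<^sub>C (\<Sum>j<mb. \<Sum>k<n. ((rt mb ^ t) ^ j * (rt ?P ^ (t*k) * inverse (of_nat mb))) *\<^sub>C uv k)"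
  proof -
    have "rt ?P ^ (t*(j*n+k)) = (rt mb ^ t) ^ j * rt ?P ^ (t*k)" if "k < n" for j k
    proof -
      have "rt ?P ^ (t*(j*n+k)) = (rt (n * mb) ^ n) ^ (t*j) * rt ?P ^ (t*k)"
        by (simp add: power_add power_mult[symmetric] algebra_simps)
      also have "\<dots> = (rt mb ^ t) ^ j * rt ?P ^ (t*k)"
        using n by (simp add: rt_mult power_mult)
      finally show ?thesis .
    qed
    then show ?thesis by (simp add: mult.assoc)
  qed
  also have "\<dots> = inverse (z^t) *\<^sub>C (\<Sum>k<n. ((\<Sum>j<mb. (rt mb ^ t) ^ j) * (rt ?P ^ (t*k) * inverse (of_nat mb))) *\<^sub>C uv k)"
    apply (subst sum.swap)
    apply (simp only: cv.scale_sum_left sum_distrib_right)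
    done
  also have "\<dots> = upsample mb (emp_seq n (z^mb) uv) t"
  proof (cases "mb dvd t")
    case True
    then obtain s where s: "t = mb * s" by blast
    have rr: "rt ?P ^ (t*k) = rt n ^ (s*k)" for k
      unfolding s by (simp add: power_mult rt_mult[OF mb] mult.assoc)
    show ?thesis
    proof -
      have c: "of_nat mb * (x * inverse (of_nat mb)) = (x::complex)" for x using mb by simp
      show ?thesis using rt_T[OF mb] rr True mb
        unfolding upsample_def emp_pow by (simp add: orth s power_mult c)
    qed
  next
    case False
    then show ?thesis using mb by (simp add: orth upsample_def)
  qed
  finally show ?thesis ..
qed

lemma down_emp:
  fixes yov :: "nat \<Rightarrow> 'v::complex_vector"
  assumes m: "0 < m" and nb: "0 < nb"
  shows "downsample nb (emp_seq (m*nb) z yov) t = emp_seq m (z^nb) (Pi_adj m 1 nb yov) t"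
proof -
  let ?P = "m * nb"
  have "downsample nb (emp_seq (m*nb) z yov) t
      = inverse (z^(nb*t)) *\<^sub>C (\<Sum>i<nb*m. rt ?P ^ (nb*t*i) *\<^sub>C yov i)"
    unfolding downsample_def emp_pow by (simp add: mult.commute)
  also have "\<dots> = inverse (z^(nb*t)) *\<^sub>C (\<Sum>j<nb. \<Sum>k<m. rt ?P ^ (nb*t*(j*m+k)) *\<^sub>C yov (j*m+k))"
    by (simp only: sum_split)
  also have "\<dots> = inverse (z^(nb*t)) *\<^sub>C (\<Sum>j<nb. \<Sum>k<m. rt m ^ (t*k) *\<^sub>C yov (k+j*m))"
  proof -
    have "rt ?P ^ (nb*t*(j*m+k)) = rt m ^ (t*k)" for j k
    proof -
      have "rt ?P ^ (nb*t*(j*m+k)) = (rt (nb * m) ^ nb) ^ (t*(j*m+k))"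
        by (simp add: power_mult[symmetric] algebra_simps)
      also have "\<dots> = rt m ^ (t*(j*m+k))" using nb by (simp add: rt_mult)
      also have "\<dots> = rt m ^ (t*k)" using m by (intro rt_cong) auto
      finally show ?thesis .
    qed
    then show ?thesis by (simp add: add.commute)
  qed
  also have "\<dots> = inverse (z^(nb*t)) *\<^sub>C (\<Sum>k<m. rt m ^ (t*k) *\<^sub>C (\<Sum>j<nb. yov (k+j*m)))"
    apply (subst sum.swap)
    apply (simp only: cv.scale_sum_right)
    done
  also have "\<dots> = emp_seq m (z^nb) (Pi_adj m 1 nb yov) t"
    unfolding emp_pow Pi_adj_def by (simp add: power_mult)
  finally show ?thesis .
qed



lemma N_vecs: "N_op P v \<in> vecs P" by (simp add: vecs_def N_op_def)
lemma toep_vecs: "toeplitz P A v \<in> vecs P" by (simp add: vecs_def toeplitz_def)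
lemma Pi_vecs: "(\<lambda>k. c *\<^sub>C Pi_op n 1 q u k) \<in> vecs (q * n)" by (simp add: vecs_def Pi_op_def)
lemma Piadj_vecs: "Pi_adj m 1 q y \<in> vecs m" by (simp add: vecs_def Pi_adj_def)
lemma add_vecs: fixes a b :: "nat \<Rightarrow> 'v::complex_vector" shows "a \<in> vecs T \<Longrightarrow> b \<in> vecs T \<Longrightarrow> (\<lambda>k. a k + b k) \<in> vecs T" by (simp add: vecs_def)
lemma scale_vecs: fixes a :: "nat \<Rightarrow> 'v::complex_vector" shows "a \<in> vecs T \<Longrightarrow> (\<lambda>k. c *\<^sub>C a k) \<in> vecs T" by (simp add: vecs_def)

lemma hat_scale: "\<forall>t. clin (A t) \<Longrightarrow> hat_op P A k (c *\<^sub>C x) = c *\<^sub>C hat_op P A k x"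
  unfolding hat_op_def by (simp add: clin_scale cv.scale_sum_right scaleC_scaleC mult_ac)

lemma toep_scale: "\<forall>t. clin (A t) \<Longrightarrow> toeplitz P A (\<lambda>l. c *\<^sub>C w l) r = c *\<^sub>C toeplitz P A w r"
  unfolding toeplitz_def by (simp add: hat_scale cv.scale_sum_right)

lemma mbnb: "0 < m \<Longrightarrow> 0 < n \<Longrightarrow> mbar m n * n = m * nbar m n \<and> 0 < mbar m n \<and> 0 < nbar m n"
proof -
  assume m: "0 < m" and n: "0 < n"
  have "mbar m n * n = m * nbar m n"
    unfolding mbar_def nbar_def
    by (metis div_mult_swap dvd_div_mult gcd_dvd1 gcd_dvd2 mult.commute)
  moreover have "0 < mbar m n" unfolding mbar_def using m
    by (simp add: div_greater_zero_iff gcd_le1_nat)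
  moreover have "0 < nbar m n" unfolding nbar_def using n
    by (simp add: div_greater_zero_iff gcd_le2_nat)
  ultimately show ?thesis by simp
qed

lemma state_fwd:
  fixes A :: "nat \<Rightarrow> 'x::complex_vector \<Rightarrow> 'x" and B :: "nat \<Rightarrow> 'u::complex_vector \<Rightarrow> 'x"
  assumes P: "0 < P" and z: "z \<noteq> 0"
    and perA: "\<forall>t. A (t + P) = A t" and perB: "\<forall>t. B (t + P) = B t"
    and linA: "\<forall>t. clin (A t)" and linB: "\<forall>t. clin (B t)"
    and eq: "N_op P xv = (\<lambda>k. z *\<^sub>C toeplitz P A xv k + z *\<^sub>C toeplitz P B uov k)"
  shows "emp_seq P z xv (Suc t) = A t (emp_seq P z xv t) + B t (emp_seq P z uov t)"
proof -
  have "(\<lambda>k. inverse z *\<^sub>C N_op P xv k) = (\<lambda>k. toeplitz P A xv k + toeplitz P B uov k)"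
    unfolding eq using z by (simp add: scaleC_add_right scaleC_scaleC)
  then show ?thesis
    by (simp add: emp_shift[OF z] op_emp[OF P perA linA] op_emp[OF P perB linB] emp_add)
qed

lemma state_bwd:
  fixes A :: "nat \<Rightarrow> 'x::complex_vector \<Rightarrow> 'x" and B :: "nat \<Rightarrow> 'u::complex_vector \<Rightarrow> 'x"
  assumes P: "0 < P" and z: "z \<noteq> 0"
    and perA: "\<forall>t. A (t + P) = A t" and perB: "\<forall>t. B (t + P) = B t"
    and linA: "\<forall>t. clin (A t)" and linB: "\<forall>t. clin (B t)"
    and xv: "xv \<in> vecs P" and uov: "uov \<in> vecs P"
    and rec: "\<forall>t. emp_seq P z xv (Suc t) = A t (emp_seq P z xv t) + B t (emp_seq P z uov t)"
  shows "N_op P xv = (\<lambda>k. z *\<^sub>C toeplitz P A xv k + z *\<^sub>C toeplitz P B uov k)"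
proof -
  have "emp_seq P z (\<lambda>k. inverse z *\<^sub>C N_op P xv k) = emp_seq P z (\<lambda>k. toeplitz P A xv k + toeplitz P B uov k)"
  proof
    fix t show "emp_seq P z (\<lambda>k. inverse z *\<^sub>C N_op P xv k) t = emp_seq P z (\<lambda>k. toeplitz P A xv k + toeplitz P B uov k) t"
      using rec by (simp add: emp_shift[OF z, symmetric] op_emp[OF P perA linA] op_emp[OF P perB linB] emp_add)
  qed
  then have "(\<lambda>k. inverse z *\<^sub>C N_op P xv k) = (\<lambda>k. toeplitz P A xv k + toeplitz P B uov k)"
    by (rule emp_inj[OF scale_vecs[OF N_vecs] add_vecs[OF toep_vecs toep_vecs] P z])
  then have "(\<lambda>k. z *\<^sub>C (inverse z *\<^sub>C N_op P xv k)) = (\<lambda>k. z *\<^sub>C (toeplitz P A xv k + toeplitz P B uov k))"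
    by metis
  then show ?thesis using z by (simp add: scaleC_add_right scaleC_scaleC)
qed

lemma out_fwd:
  fixes C :: "nat \<Rightarrow> 'x::complex_vector \<Rightarrow> 'y::complex_vector" and D :: "nat \<Rightarrow> 'u::complex_vector \<Rightarrow> 'y"
  assumes P: "0 < P"
    and perC: "\<forall>t. C (t + P) = C t" and perD: "\<forall>t. D (t + P) = D t"
    and linC: "\<forall>t. clin (C t)" and linD: "\<forall>t. clin (D t)"
  shows "C t (emp_seq P z xv t) + D t (emp_seq P z uov t) = emp_seq P z (\<lambda>k. toeplitz P C xv k + toeplitz P D uov k) t"
  by (simp add: op_emp[OF P perC linC] op_emp[OF P perD linD] emp_add)



theorem theorem7:
  fixes m n :: nat
    and A :: "nat \<Rightarrow> 'x::sep_chilbert \<Rightarrow> 'x"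
    and B :: "nat \<Rightarrow> 'u::sep_chilbert \<Rightarrow> 'x"
    and C :: "nat \<Rightarrow> 'x \<Rightarrow> 'y::sep_chilbert"
    and D :: "nat \<Rightarrow> 'u \<Rightarrow> 'y"
    and z :: complex
    and u :: "nat \<Rightarrow> 'u"
  assumes m_pos: "0 < m" and n_pos: "0 < n"
    and per_A: "\<forall>t. A (t + m * nbar m n) = A t"
    and per_B: "\<forall>t. B (t + m * nbar m n) = B t"
    and per_C: "\<forall>t. C (t + m * nbar m n) = C t"
    and per_D: "\<forall>t. D (t + m * nbar m n) = D t"
    and bdd: "\<forall>t. bounded_clinear (A t) \<and> bounded_clinear (B t) \<and>
                   bounded_clinear (C t) \<and> bounded_clinear (D t)"
    and z_nz: "z \<noteq> 0"
    and z_rho: "z \<in> rho (m * nbar m n) (toeplitz (m * nbar m n) A)"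
    and u_emp: "is_EMP n (z ^ mbar m n) u"
  shows
    "(\<exists>!x0. is_EMP (m * nbar m n) z (upsample (mbar m n) u) \<and>
            is_EMP (m * nbar m n) z (central_state A B (upsample (mbar m n) u) x0) \<and>
            is_EMP (m * nbar m n) z (central_output C D (central_state A B (upsample (mbar m n) u) x0)
                                      (upsample (mbar m n) u)))
     \<and>
     (\<forall>x0. is_EMP (m * nbar m n) z (upsample (mbar m n) u) \<and>
            is_EMP (m * nbar m n) z (central_state A B (upsample (mbar m n) u) x0) \<and>
            is_EMP (m * nbar m n) z (central_output C D (central_state A B (upsample (mbar m n) u) x0)
                                      (upsample (mbar m n) u))
       \<longrightarrow> is_EMP m (z ^ nbar m n) (downsample (nbar m n)
              (central_output C D (central_state A B (upsample (mbar m n) u) x0) (upsample (mbar m n) u)))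
         \<and> star_eqs m n A B C D z
              (F_trans n (z ^ mbar m n) u)
              (F_trans (m * nbar m n) z (upsample (mbar m n) u))
              (F_trans (m * nbar m n) z (central_state A B (upsample (mbar m n) u) x0))
              (F_trans (m * nbar m n) z (central_output C D (central_state A B (upsample (mbar m n) u) x0)
                                          (upsample (mbar m n) u)))
              (F_trans m (z ^ nbar m n) (downsample (nbar m n)
                 (central_output C D (central_state A B (upsample (mbar m n) u) x0) (upsample (mbar m n) u)))))
     \<and>
     (\<forall>uv uov xv yov yv.
        uv \<in> vecs n \<and> uov \<in> vecs (m * nbar m n) \<and> xv \<in> vecs (m * nbar m n) \<and>
        yov \<in> vecs (m * nbar m n) \<and> yv \<in> vecs m \<and>
        star_eqs m n A B C D z uv uov xv yov yv
        \<longrightarrow> multirate_eqs m n A B C D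
              (emp_seq n (z ^ mbar m n) uv) (emp_seq (m * nbar m n) z uov)
              (emp_seq (m * nbar m n) z xv) (emp_seq (m * nbar m n) z yov)
              (emp_seq m (z ^ nbar m n) yv)
            \<and> emp_seq (m * nbar m n) z xv 0 = (\<Sum>k < m * nbar m n. xv k))
     \<and>
     (\<forall>uv \<in> vecs n. \<exists>!(uov, xv, yov, yv).
        uov \<in> vecs (m * nbar m n) \<and> xv \<in> vecs (m * nbar m n) \<and>
        yov \<in> vecs (m * nbar m n) \<and> yv \<in> vecs m \<and>
        star_eqs m n A B C D z uv uov xv yov yv)
     \<and>
     (\<forall>uv uov xv yov yv.
        uv \<in> vecs n \<and> uov \<in> vecs (m * nbar m n) \<and> xv \<in> vecs (m * nbar m n) \<and>
        yov \<in> vecs (m * nbar m n) \<and> yv \<in> vecs m \<and>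
        star_eqs m n A B C D z uv uov xv yov yv
        \<longrightarrow> yv = transfer m n A B C D z uv)"
proof -
  let ?mb = "mbar m n" and ?nb = "nbar m n"
  let ?P = "m * nbar m n"
  have mb: "?mb * n = ?P" "0 < ?mb" "0 < ?nb" using mbnb[OF m_pos n_pos] by auto
  have P: "0 < ?P" using m_pos mb by simp
  have zmb: "z ^ ?mb \<noteq> 0" and znb: "z ^ ?nb \<noteq> 0" using z_nz by auto
  have linA: "\<forall>t. clin (A t)" and linB: "\<forall>t. clin (B t)"
    and linC: "\<forall>t. clin (C t)" and linD: "\<forall>t. clin (D t)"
    using bdd bcl_clin by blast+
  obtain G where
    Ginv: "\<forall>v\<in>vecs ?P. G v \<in> vecs ?P \<and> G (\<lambda>k. N_op ?P v k - z *\<^sub>C toeplitz ?P A v k) = v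
             \<and> (\<lambda>k. N_op ?P (G v) k - z *\<^sub>C toeplitz ?P A (G v) k) = v" and
    Glin: "\<forall>a b v w. v \<in> vecs ?P \<longrightarrow> w \<in> vecs ?P \<longrightarrow>
        G (\<lambda>k. a *\<^sub>C v k + b *\<^sub>C w k) = (\<lambda>k. a *\<^sub>C G v k + b *\<^sub>C G w k)"
    using z_rho unfolding rho_def has_bounded_inverse_def by blast
  define Uo where "Uo = (\<lambda>uv k. inverse (of_nat ?mb) *\<^sub>C Pi_op n 1 ?mb (uv :: nat \<Rightarrow> 'u) k)"
  define TB where "TB = (\<lambda>uv k. z *\<^sub>C toeplitz ?P B (Uo uv) k)"
  define Xs where "Xs = (\<lambda>uv. G (TB uv))"
  define Ys where "Ys = (\<lambda>uv k. toeplitz ?P C (Xs uv) k + toeplitz ?P D (Uo uv) k)"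
  define Yv where "Yv = (\<lambda>uv. Pi_adj m 1 ?nb (Ys uv))"
  have Uo_vecs: "Uo uv \<in> vecs ?P" for uv
    unfolding Uo_def using Pi_vecs[of "inverse (of_nat ?mb)" n ?mb uv] mb(1) by simp
  have TB_vecs: "TB uv \<in> vecs ?P" for uv
    unfolding TB_def by (rule scale_vecs[OF toep_vecs])
  have Xs_vecs: "Xs uv \<in> vecs ?P" for uv
    unfolding Xs_def using Ginv TB_vecs by blast
  have Xs_L: "(\<lambda>k. N_op ?P (Xs uv) k - z *\<^sub>C toeplitz ?P A (Xs uv) k) = TB uv" for uv
    unfolding Xs_def using Ginv TB_vecs by blast
  have star_iff: "star_eqs m n A B C D z uv uov xv yov yv \<longleftrightarrow>
      N_op ?P xv = (\<lambda>k. z *\<^sub>C toeplitz ?P A xv k + z *\<^sub>C toeplitz ?P B uov k) \<and>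
      yov = (\<lambda>k. toeplitz ?P C xv k + toeplitz ?P D uov k) \<and>
      uov = Uo uv \<and> yv = Pi_adj m 1 ?nb yov" for uv uov xv yov yv
    unfolding star_eqs_def Let_def Uo_def ..
  have N_L: "N_op ?P xv = (\<lambda>k. z *\<^sub>C toeplitz ?P A xv k + z *\<^sub>C toeplitz ?P B uov k)
     \<longleftrightarrow> (\<lambda>k. N_op ?P xv k - z *\<^sub>C toeplitz ?P A xv k) = (\<lambda>k. z *\<^sub>C toeplitz ?P B uov k)" for xv uov
  proof -
    have "\<And>a b c :: 'x. a = b + c \<longleftrightarrow> a - b = c" by (metis diff_eq_eq add.commute)
    then show ?thesis unfolding fun_eq_iff by presburger
  qed
  have star_ex: "star_eqs m n A B C D z uv (Uo uv) (Xs uv) (Ys uv) (Yv uv)" for uv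
    unfolding star_iff Ys_def Yv_def using Xs_L[of uv] by (simp add: N_L TB_def)
  have star_uniq: "uov = Uo uv \<and> xv = Xs uv \<and> yov = Ys uv \<and> yv = Yv uv"
    if st: "star_eqs m n A B C D z uv uov xv yov yv" and xv: "xv \<in> vecs ?P" for uv uov xv yov yv
  proof -
    have e: "N_op ?P xv = (\<lambda>k. z *\<^sub>C toeplitz ?P A xv k + z *\<^sub>C toeplitz ?P B uov k)"
      "yov = (\<lambda>k. toeplitz ?P C xv k + toeplitz ?P D uov k)"
      "uov = Uo uv" "yv = Pi_adj m 1 ?nb yov" using st unfolding star_iff by auto
    have "(\<lambda>k. N_op ?P xv k - z *\<^sub>C toeplitz ?P A xv k) = TB uv"
      using e(1) unfolding N_L TB_def e(3) .
    then have "xv = G (TB uv)" using Ginv xv by metis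
    then have "xv = Xs uv" unfolding Xs_def .
    then show ?thesis using e unfolding Ys_def Yv_def by simp
  qed
  have u_eq: "u = emp_seq n (z ^ ?mb) (F_trans n (z ^ ?mb) u)"
    by (rule EMP_F[OF u_emp n_pos zmb])
  have up_eq: "upsample ?mb (emp_seq n (z ^ ?mb) uv) = emp_seq ?P z (Uo uv)" for uv
  proof
    fix t show "upsample ?mb (emp_seq n (z ^ ?mb) uv) t = emp_seq ?P z (Uo uv) t"
      using up_emp[OF mb(2) n_pos, of z uv t] mb(1) unfolding Uo_def by simp
  qed
  have down_eq: "downsample ?nb (emp_seq ?P z yov) = emp_seq m (z ^ ?nb) (Pi_adj m 1 ?nb yov)" for yov :: "nat \<Rightarrow> 'y"
    by (intro ext) (rule down_emp[OF m_pos mb(3)])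
  have part3: "\<forall>uv uov xv yov yv.
        uv \<in> vecs n \<and> uov \<in> vecs (m * nbar m n) \<and> xv \<in> vecs (m * nbar m n) \<and>
        yov \<in> vecs (m * nbar m n) \<and> yv \<in> vecs m \<and>
        star_eqs m n A B C D z uv uov xv yov yv
        \<longrightarrow> multirate_eqs m n A B C D
              (emp_seq n (z ^ mbar m n) uv) (emp_seq (m * nbar m n) z uov)
              (emp_seq (m * nbar m n) z xv) (emp_seq (m * nbar m n) z yov)
              (emp_seq m (z ^ nbar m n) yv)
            \<and> emp_seq (m * nbar m n) z xv 0 = (\<Sum>k < m * nbar m n. xv k)"
  proof (intro allI impI)
    fix uv uov xv yov yv
    assume H: "uv \<in> vecs n \<and> uov \<in> vecs (m * nbar m n) \<and> xv \<in> vecs (m * nbar m n) \<and>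
        yov \<in> vecs (m * nbar m n) \<and> yv \<in> vecs m \<and> star_eqs m n A B C D z uv uov xv yov yv"
    then have e: "N_op ?P xv = (\<lambda>k. z *\<^sub>C toeplitz ?P A xv k + z *\<^sub>C toeplitz ?P B uov k)"
      "yov = (\<lambda>k. toeplitz ?P C xv k + toeplitz ?P D uov k)"
      "uov = Uo uv" "yv = Pi_adj m 1 ?nb yov" unfolding star_iff by auto
    have a: "\<forall>t. emp_seq ?P z xv (Suc t) = A t (emp_seq ?P z xv t) + B t (emp_seq ?P z uov t)"
      using state_fwd[OF P z_nz per_A per_B linA linB e(1)] by blast
    have b: "\<forall>t. emp_seq ?P z yov t = C t (emp_seq ?P z xv t) + D t (emp_seq ?P z uov t)"
      using out_fwd[OF P per_C per_D linC linD] e(2) by simp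
    have c: "emp_seq ?P z uov = upsample ?mb (emp_seq n (z ^ ?mb) uv)"
      using up_eq e(3) by simp
    have d: "emp_seq m (z ^ ?nb) yv = downsample ?nb (emp_seq ?P z yov)"
      using down_eq e(4) by simp
    show "multirate_eqs m n A B C D
              (emp_seq n (z ^ mbar m n) uv) (emp_seq (m * nbar m n) z uov)
              (emp_seq (m * nbar m n) z xv) (emp_seq (m * nbar m n) z yov)
              (emp_seq m (z ^ nbar m n) yv)
            \<and> emp_seq (m * nbar m n) z xv 0 = (\<Sum>k < m * nbar m n. xv k)"
      unfolding multirate_eqs_def using a b c d by (simp add: emp_zero)
  qed
  have part2: "\<forall>x0. is_EMP (m * nbar m n) z (upsample (mbar m n) u) \<and>
            is_EMP (m * nbar m n) z (central_state A B (upsample (mbar m n) u) x0) \<and>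
            is_EMP (m * nbar m n) z (central_output C D (central_state A B (upsample (mbar m n) u) x0)
                                      (upsample (mbar m n) u))
       \<longrightarrow> is_EMP m (z ^ nbar m n) (downsample (nbar m n)
              (central_output C D (central_state A B (upsample (mbar m n) u) x0) (upsample (mbar m n) u)))
         \<and> star_eqs m n A B C D z
              (F_trans n (z ^ mbar m n) u)
              (F_trans (m * nbar m n) z (upsample (mbar m n) u))
              (F_trans (m * nbar m n) z (central_state A B (upsample (mbar m n) u) x0))
              (F_trans (m * nbar m n) z (central_output C D (central_state A B (upsample (mbar m n) u) x0)
                                          (upsample (mbar m n) u)))
              (F_trans m (z ^ nbar m n) (downsample (nbar m n)
                 (central_output C D (central_state A B (upsample (mbar m n) u) x0) (upsample (mbar m n) u))))"
  proof (intro allI impI)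
    fix x0
    let ?uo = "upsample ?mb u"
    let ?x = "central_state A B ?uo x0"
    let ?yo = "central_output C D ?x ?uo"
    assume H: "is_EMP ?P z ?uo \<and> is_EMP ?P z ?x \<and> is_EMP ?P z ?yo"
    define uv where "uv = F_trans n (z ^ ?mb) u"
    define xv where "xv = F_trans ?P z ?x"
    define yov where "yov = F_trans ?P z ?yo"
    have uo_eq: "?uo = emp_seq ?P z (Uo uv)"
      using up_eq[of uv] u_eq unfolding uv_def by simp
    have F_uo: "F_trans ?P z ?uo = Uo uv"
      unfolding uo_eq by (rule F_emp_vecs[OF Uo_vecs P z_nz])
    have x_eq: "?x = emp_seq ?P z xv" unfolding xv_def using EMP_F[OF _ P z_nz] H by blast
    have yo_eq: "?yo = emp_seq ?P z yov" unfolding yov_def using EMP_F[OF _ P z_nz] H by blast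
    have rec: "\<forall>t. emp_seq ?P z xv (Suc t) = A t (emp_seq ?P z xv t) + B t (emp_seq ?P z (Uo uv) t)"
    proof
      fix t
      have "?x (Suc t) = A t (?x t) + B t (?uo t)" by simp
      then show "emp_seq ?P z xv (Suc t) = A t (emp_seq ?P z xv t) + B t (emp_seq ?P z (Uo uv) t)"
        by (simp only: x_eq[symmetric] uo_eq[symmetric])
    qed
    have eN: "N_op ?P xv = (\<lambda>k. z *\<^sub>C toeplitz ?P A xv k + z *\<^sub>C toeplitz ?P B (Uo uv) k)"
      by (rule state_bwd[OF P z_nz per_A per_B linA linB _ Uo_vecs rec]) (simp add: xv_def F_vecs)
    have "emp_seq ?P z yov = emp_seq ?P z (\<lambda>k. toeplitz ?P C xv k + toeplitz ?P D (Uo uv) k)"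
    proof
      fix t
      have "?yo t = C t (?x t) + D t (?uo t)" by (simp add: central_output_def)
      then have "emp_seq ?P z yov t = C t (emp_seq ?P z xv t) + D t (emp_seq ?P z (Uo uv) t)"
        by (simp only: yo_eq[symmetric] x_eq[symmetric] uo_eq[symmetric])
      then show "emp_seq ?P z yov t = emp_seq ?P z (\<lambda>k. toeplitz ?P C xv k + toeplitz ?P D (Uo uv) k) t"
        by (simp only: out_fwd[OF P per_C per_D linC linD])
    qed
    then have eY: "yov = (\<lambda>k. toeplitz ?P C xv k + toeplitz ?P D (Uo uv) k)"
      by (rule emp_inj[OF _ add_vecs[OF toep_vecs toep_vecs] P z_nz, rotated])
         (simp add: yov_def F_vecs)
    have y_eq: "downsample ?nb ?yo = emp_seq m (z ^ ?nb) (Pi_adj m 1 ?nb yov)"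
      unfolding yo_eq by (rule down_eq)
    have F_y: "F_trans m (z ^ ?nb) (downsample ?nb ?yo) = Pi_adj m 1 ?nb yov"
      unfolding y_eq by (rule F_emp_vecs[OF Piadj_vecs m_pos znb])
    show "is_EMP m (z ^ nbar m n) (downsample (nbar m n) ?yo) \<and>
      star_eqs m n A B C D z (F_trans n (z ^ mbar m n) u) (F_trans (m * nbar m n) z ?uo)
        (F_trans (m * nbar m n) z ?x) (F_trans (m * nbar m n) z ?yo)
        (F_trans m (z ^ nbar m n) (downsample (nbar m n) ?yo))"
      unfolding F_y F_uo xv_def[symmetric] yov_def[symmetric] uv_def[symmetric] star_iff
      using y_eq eN eY unfolding is_EMP_def by blast
  qed
  have part4: "\<forall>uv \<in> vecs n. \<exists>!(uov, xv, yov, yv).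
        uov \<in> vecs (m * nbar m n) \<and> xv \<in> vecs (m * nbar m n) \<and>
        yov \<in> vecs (m * nbar m n) \<and> yv \<in> vecs m \<and>
        star_eqs m n A B C D z uv uov xv yov yv"
  proof
    fix uv :: "nat \<Rightarrow> 'u" assume "uv \<in> vecs n"
    show "\<exists>!(uov, xv, yov, yv).
        uov \<in> vecs (m * nbar m n) \<and> xv \<in> vecs (m * nbar m n) \<and>
        yov \<in> vecs (m * nbar m n) \<and> yv \<in> vecs m \<and>
        star_eqs m n A B C D z uv uov xv yov yv"
    proof (rule ex1I[of _ "(Uo uv, Xs uv, Ys uv, Yv uv)"])
      show "case (Uo uv, Xs uv, Ys uv, Yv uv) of (uov, xv, yov, yv) \<Rightarrow>
        uov \<in> vecs (m * nbar m n) \<and> xv \<in> vecs (m * nbar m n) \<and>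
        yov \<in> vecs (m * nbar m n) \<and> yv \<in> vecs m \<and>
        star_eqs m n A B C D z uv uov xv yov yv"
        using Uo_vecs Xs_vecs star_ex
        by (simp add: Ys_def Yv_def add_vecs toep_vecs Piadj_vecs)
    next
      fix p assume "case p of (uov, xv, yov, yv) \<Rightarrow>
        uov \<in> vecs (m * nbar m n) \<and> xv \<in> vecs (m * nbar m n) \<and>
        yov \<in> vecs (m * nbar m n) \<and> yv \<in> vecs m \<and>
        star_eqs m n A B C D z uv uov xv yov yv"
      then show "p = (Uo uv, Xs uv, Ys uv, Yv uv)"
        using star_uniq by (cases p) auto
    qed
  qed
  have Gv: "vec_inv ?P (\<lambda>v k. N_op ?P v k - z *\<^sub>C toeplitz ?P A v k) (toeplitz ?P B (Uo uv))
      = G (toeplitz ?P B (Uo uv))" for uv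
    unfolding vec_inv_def
  proof (rule some_equality)
    show "G (toeplitz ?P B (Uo uv)) \<in> vecs ?P \<and>
      (\<lambda>k. N_op ?P (G (toeplitz ?P B (Uo uv))) k - z *\<^sub>C toeplitz ?P A (G (toeplitz ?P B (Uo uv))) k) = toeplitz ?P B (Uo uv)"
      using Ginv toep_vecs by blast
  next
    fix w assume "w \<in> vecs ?P \<and> (\<lambda>k. N_op ?P w k - z *\<^sub>C toeplitz ?P A w k) = toeplitz ?P B (Uo uv)"
    then show "w = G (toeplitz ?P B (Uo uv))" using Ginv by metis
  qed
  have Xs_G: "Xs uv = (\<lambda>k. z *\<^sub>C G (toeplitz ?P B (Uo uv)) k)" for uv
  proof -
    have "G (\<lambda>k. z *\<^sub>C toeplitz ?P B (Uo uv) k + 0 *\<^sub>C toeplitz ?P B (Uo uv) k)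
       = (\<lambda>k. z *\<^sub>C G (toeplitz ?P B (Uo uv)) k + 0 *\<^sub>C G (toeplitz ?P B (Uo uv)) k)"
      using Glin toep_vecs by blast
    then show ?thesis unfolding Xs_def TB_def by simp
  qed
  have tr: "transfer m n A B C D z uv = Yv uv" for uv
  proof -
    have "(\<lambda>k. z *\<^sub>C toeplitz ?P C (G (toeplitz ?P B (Uo uv))) k + toeplitz ?P D (Uo uv) k) = Ys uv"
      unfolding Ys_def Xs_G toep_scale[OF linC] ..
    then show ?thesis unfolding transfer_def Let_def Yv_def Gv[unfolded Uo_def] Uo_def by simp
  qed
  have part5: "\<forall>uv uov xv yov yv.
        uv \<in> vecs n \<and> uov \<in> vecs (m * nbar m n) \<and> xv \<in> vecs (m * nbar m n) \<and>
        yov \<in> vecs (m * nbar m n) \<and> yv \<in> vecs m \<and>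
        star_eqs m n A B C D z uv uov xv yov yv
        \<longrightarrow> yv = transfer m n A B C D z uv"
  proof (intro allI impI)
    fix uv uov xv yov yv
    assume H: "uv \<in> vecs n \<and> uov \<in> vecs (m * nbar m n) \<and> xv \<in> vecs (m * nbar m n) \<and>
        yov \<in> vecs (m * nbar m n) \<and> yv \<in> vecs m \<and> star_eqs m n A B C D z uv uov xv yov yv"
    then have "yv = Yv uv" using star_uniq[of uv uov xv yov yv] by simp
    then show "yv = transfer m n A B C D z uv" using tr by simp
  qed
  define uv0 where "uv0 = F_trans n (z ^ ?mb) u"
  have u0: "emp_seq n (z ^ ?mb) uv0 = u" using u_eq unfolding uv0_def by simp
  have uv0_vecs: "uv0 \<in> vecs n" unfolding uv0_def by (rule F_vecs)
  have mr: "multirate_eqs m n A B C D u (emp_seq ?P z (Uo uv0)) (emp_seq ?P z (Xs uv0))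
     (emp_seq ?P z (Ys uv0)) (emp_seq m (z ^ ?nb) (Yv uv0))"
  proof -
    have v: "Ys uv0 \<in> vecs ?P" "Yv uv0 \<in> vecs m"
      by (simp_all add: Ys_def Yv_def add_vecs toep_vecs Piadj_vecs)
    have "multirate_eqs m n A B C D (emp_seq n (z ^ ?mb) uv0) (emp_seq ?P z (Uo uv0)) (emp_seq ?P z (Xs uv0))
     (emp_seq ?P z (Ys uv0)) (emp_seq m (z ^ ?nb) (Yv uv0))"
      using part3 uv0_vecs Uo_vecs Xs_vecs v star_ex
      by (meson conjunct1)
    then show ?thesis by (simp only: u0)
  qed
  have uo0: "upsample ?mb u = emp_seq ?P z (Uo uv0)"
    and mrA: "\<forall>t. emp_seq ?P z (Xs uv0) (Suc t) = A t (emp_seq ?P z (Xs uv0) t) + B t (emp_seq ?P z (Uo uv0) t)"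
    and mrB: "\<forall>t. emp_seq ?P z (Ys uv0) t = C t (emp_seq ?P z (Xs uv0) t) + D t (emp_seq ?P z (Uo uv0) t)"
    using mr unfolding multirate_eqs_def by auto
  let ?x0 = "emp_seq ?P z (Xs uv0) 0"
  have cs: "central_state A B (upsample ?mb u) ?x0 = emp_seq ?P z (Xs uv0)"
  proof
    fix t show "central_state A B (upsample ?mb u) ?x0 t = emp_seq ?P z (Xs uv0) t"
    proof (induction t)
      case 0 show ?case by simp
    next
      case (Suc t)
      have "central_state A B (upsample ?mb u) ?x0 (Suc t)
          = A t (central_state A B (upsample ?mb u) ?x0 t) + B t (upsample ?mb u t)" by simp
      also have "\<dots> = A t (emp_seq ?P z (Xs uv0) t) + B t (emp_seq ?P z (Uo uv0) t)"
        by (simp only: Suc.IH, simp only: uo0)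
      also have "\<dots> = emp_seq ?P z (Xs uv0) (Suc t)" using mrA by simp
      finally show ?case .
    qed
  qed
  have co: "central_output C D (central_state A B (upsample ?mb u) ?x0) (upsample ?mb u) = emp_seq ?P z (Ys uv0)"
  proof
    fix t
    have "central_output C D (central_state A B (upsample ?mb u) ?x0) (upsample ?mb u) t
        = C t (emp_seq ?P z (Xs uv0) t) + D t (emp_seq ?P z (Uo uv0) t)"
      unfolding central_output_def by (simp only: cs, simp only: uo0)
    also have "\<dots> = emp_seq ?P z (Ys uv0) t" using mrB by simp
    finally show "central_output C D (central_state A B (upsample ?mb u) ?x0) (upsample ?mb u) t = emp_seq ?P z (Ys uv0) t" .
  qed
  have part1: "\<exists>!x0. is_EMP (m * nbar m n) z (upsample (mbar m n) u) \<and>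
            is_EMP (m * nbar m n) z (central_state A B (upsample (mbar m n) u) x0) \<and>
            is_EMP (m * nbar m n) z (central_output C D (central_state A B (upsample (mbar m n) u) x0)
                                      (upsample (mbar m n) u))"
  proof (rule ex1I[of _ ?x0])
    show "is_EMP ?P z (upsample ?mb u) \<and> is_EMP ?P z (central_state A B (upsample ?mb u) ?x0) \<and>
      is_EMP ?P z (central_output C D (central_state A B (upsample ?mb u) ?x0) (upsample ?mb u))"
      unfolding co unfolding cs unfolding uo0 unfolding is_EMP_def by blast
  next
    fix x1 assume H1: "is_EMP ?P z (upsample ?mb u) \<and> is_EMP ?P z (central_state A B (upsample ?mb u) x1) \<and>
      is_EMP ?P z (central_output C D (central_state A B (upsample ?mb u) x1) (upsample ?mb u))"
    then have "star_eqs m n A B C D z uv0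
              (F_trans ?P z (upsample ?mb u))
              (F_trans ?P z (central_state A B (upsample ?mb u) x1))
              (F_trans ?P z (central_output C D (central_state A B (upsample ?mb u) x1) (upsample ?mb u)))
              (F_trans m (z ^ ?nb) (downsample ?nb
                 (central_output C D (central_state A B (upsample ?mb u) x1) (upsample ?mb u))))"
      using part2 unfolding uv0_def by blast
    then have "F_trans ?P z (central_state A B (upsample ?mb u) x1) = Xs uv0"
      using star_uniq F_vecs by blast
    moreover have "central_state A B (upsample ?mb u) x1 = emp_seq ?P z (F_trans ?P z (central_state A B (upsample ?mb u) x1))"
      using EMP_F[OF _ P z_nz] H1 by blast
    ultimately have "central_state A B (upsample ?mb u) x1 = emp_seq ?P z (Xs uv0)" by simp
    then have "central_state A B (upsample ?mb u) x1 0 = ?x0" by simp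
    then show "x1 = ?x0" by simp
  qed
  show ?thesis using part1 part2 part3 part4 part5 by (intro conjI)
qed


end
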